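(* For every positive integer $s$ there exist positive reals $\alpha_s,\beta_s$ such that for every $n\ge1$ and every valid pair $(\mathbf{x},\mathbf{k})$ of length $s$, $$\alpha_s\frac{n^{3/2}}{\prod'_i m_i^{3/2}}\le \Pr[A(\mathbf{x},\mathbf{k})]\le \beta_s\frac{n^{3/2}}{\prod'_i m_i^{3/2}},$$ where $\prod'$ denotes the product over those $0\le i\le s$ with $m_i\ne0$.
   Context: $C$ is a uniformly random Catalan-arc matching on the points $1,\dots,2n$ (a perfect matching with no $a<b<c<d$ such that $\{a,c\},\{b,d\}$ are both arcs). For $s$-tuples of positive integers $\mathbf{x}=(x_1<\dots<x_s)$, $\mathbf{k}=(k_1,\dots,k_s)$, $(\mathbf{x},\mathbf{k})$ is a valid pair if (1) $1\le x_i<x_i+2k_i-1\le 2n$; (2) the integers $x_i,x_i+2k_i-1$ ($1\le i\le s$) are all distinct; (3) there are no $i\ne j$ with $x_i<x_j<x_i+2k_i-1<x_j+2k_j-1$. $A(\mathbf{x},\mathbf{k})$ is the event that $x_i$ and $x_i+2k_i-1$ are joined by an arc of $C$ for all $i$. With $I_i=[x_i,x_i+2k_i-1]$, for $1\le i\le s$ let $M_i$ be the set of $x$ with $x_i<x<x_i+2k_i-1$ lying in no $I_j$ with $j\ne i$, $I_j\subset I_i$; let $M_0$ be the set of $x\in\{1,\dots,2n\}$ lying in no $I_i$; $m_i=|M_i|/2$. *)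

theory Defs
  imports Complex_Main
begin

definition perfect_matching :: "nat \<Rightarrow> (nat \<times> nat) set \<Rightarrow> bool" where
  "perfect_matching n M \<longleftrightarrow>
     M \<subseteq> {(a,b). 1 \<le> a \<and> a < b \<and> b \<le> 2*n} \<and>
     (\<forall>v\<in>{1..2*n}. \<exists>!p. p \<in> M \<and> (fst p = v \<or> snd p = v))"

definition noncrossing :: "(nat \<times> nat) set \<Rightarrow> bool" where
  "noncrossing M \<longleftrightarrow> \<not> (\<exists>a b c d. a < b \<and> b < c \<and> c < d \<and> (a,c) \<in> M \<and> (b,d) \<in> M)"

definition catalan_matchings :: "nat \<Rightarrow> (nat \<times> nat) set set" where
  "catalan_matchings n = {M. perfect_matching n M \<and> noncrossing M}"

text \<open>Right endpoint x_i + 2 k_i - 1 (indices are 0-based: i < s).\<close>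
definition rend :: "(nat \<Rightarrow> nat) \<Rightarrow> (nat \<Rightarrow> nat) \<Rightarrow> nat \<Rightarrow> nat" where
  "rend x k i = x i + 2 * k i - 1"

definition valid_pair :: "nat \<Rightarrow> nat \<Rightarrow> (nat \<Rightarrow> nat) \<Rightarrow> (nat \<Rightarrow> nat) \<Rightarrow> bool" where
  "valid_pair n s x k \<longleftrightarrow>
     (\<forall>i<s. \<forall>j<s. i < j \<longrightarrow> x i < x j) \<and>
     (\<forall>i<s. 0 < k i \<and> 1 \<le> x i \<and> x i < rend x k i \<and> rend x k i \<le> 2*n) \<and>
     (\<forall>i<s. \<forall>j<s. i \<noteq> j \<longrightarrow>
        x i \<noteq> x j \<and> x i \<noteq> rend x k j \<and> rend x k i \<noteq> rend x k j) \<and>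
     (\<forall>i<s. \<forall>j<s. i \<noteq> j \<longrightarrow> \<not> (x i < x j \<and> x j < rend x k i \<and> rend x k i < rend x k j))"

definition probA :: "nat \<Rightarrow> nat \<Rightarrow> (nat \<Rightarrow> nat) \<Rightarrow> (nat \<Rightarrow> nat) \<Rightarrow> real" where
  "probA n s x k =
     real (card {M \<in> catalan_matchings n. \<forall>i<s. (x i, rend x k i) \<in> M})
     / real (card (catalan_matchings n))"

text \<open>M_i for the interval with 0-based index i < s (paper's M_{i+1}).\<close>
definition Mset :: "nat \<Rightarrow> (nat \<Rightarrow> nat) \<Rightarrow> (nat \<Rightarrow> nat) \<Rightarrow> nat \<Rightarrow> nat set" where
  "Mset s x k i = {v. x i < v \<and> v < rend x k i \<and>
      (\<forall>j<s. j \<noteq> i \<and> {x j..rend x k j} \<subseteq> {x i..rend x k i} \<longrightarrow> v \<notin> {x j..rend x k j})}"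

definition M0 :: "nat \<Rightarrow> nat \<Rightarrow> (nat \<Rightarrow> nat) \<Rightarrow> (nat \<Rightarrow> nat) \<Rightarrow> nat set" where
  "M0 n s x k = {v \<in> {1..2*n}. \<forall>i<s. v \<notin> {x i..rend x k i}}"

definition prod_m :: "nat \<Rightarrow> nat \<Rightarrow> (nat \<Rightarrow> nat) \<Rightarrow> (nat \<Rightarrow> nat) \<Rightarrow> real" where
  "prod_m n s x k =
     (let m0 = real (card (M0 n s x k)) / 2 in if m0 \<noteq> 0 then m0 powr (3/2) else 1) *
     (\<Prod>i\<in>{i. i < s \<and> real (card (Mset s x k i)) / 2 \<noteq> 0}.
         (real (card (Mset s x k i)) / 2) powr (3/2))"

end

theory Submission
  imports Defs "HOL-Computational_Algebra.Formal_Power_Series"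
begin


definition gq :: "nat \<Rightarrow> real" where
  "gq k = (((1::real)/2) gchoose k) * (-4) ^ k"

definition Dc :: "nat \<Rightarrow> real" where
  "Dc m = - gq (Suc m) / 2"

lemma gq_0: "gq 0 = 1" by (simp add: gq_def)

lemma gq_Suc: "gq (Suc k) = gq k * (4 * real k - 2) / (real k + 1)"
proof -
  have h: "((1::real)/2) * (((1::real)/2) gchoose k) = real k * (((1::real)/2) gchoose k) + real (Suc k) * (((1::real)/2) gchoose (Suc k))"
    by (rule gbinomial_mult_1)
  have h2: "(((1::real)/2) gchoose (Suc k)) * (2 * real k + 2) = (((1::real)/2) gchoose k) * (1 - 2 * real k)"
    using h by (simp add: algebra_simps)
  have "gq (Suc k) * (real k + 1) = (-2) * (-4)^k * ((((1::real)/2) gchoose (Suc k)) * (2 * real k + 2))"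
    unfolding gq_def by (simp add: algebra_simps)
  also have "\<dots> = gq k * (4 * real k - 2)"
    unfolding h2 gq_def by (simp add: algebra_simps)
  finally show ?thesis by (simp add: field_simps)
qed

lemma Dc_0: "Dc 0 = 1"
  by (simp add: Dc_def gq_Suc gq_0)

lemma Dc_Suc: "Dc (Suc m) = Dc m * (4 * real m + 2) / (real m + 2)"
  unfolding Dc_def by (subst gq_Suc) (simp add: field_simps)

lemma gq_conv: "N \<ge> 2 \<Longrightarrow> (\<Sum>k=0..N. gq k * gq (N - k)) = 0"
proof -
  assume N: "N \<ge> 2"
  have "(\<Sum>k=0..N. gq k * gq (N - k)) = (\<Sum>k=0..N. ((((1::real)/2) gchoose k) * (((1::real)/2) gchoose (N - k))) * (-4)^N)"
    by (rule sum.cong) (auto simp: gq_def power_add[symmetric])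
  also have "\<dots> = (\<Sum>k=0..N. (((1::real)/2) gchoose k) * (((1::real)/2) gchoose (N - k))) * (-4)^N"
    by (simp add: sum_distrib_right)
  also have "(\<Sum>k=0..N. (((1::real)/2) gchoose k) * (((1::real)/2) gchoose (N - k))) = (1::real) gchoose N"
    using gbinomial_Vandermonde[of "(1::real)/2" "1/2" N] by simp
  also have "(1::real) gchoose N = 0"
    using binomial_gbinomial[of 1 N, where 'a=real] N by (simp add: binomial_eq_0)
  finally show ?thesis by simp
qed

lemma Dc_conv: "(\<Sum>i=0..m. Dc i * Dc (m - i)) = Dc (Suc m)"
proof -
  have "0 = (\<Sum>k=0..Suc (Suc m). gq k * gq (Suc (Suc m) - k))"
    using gq_conv[of "Suc (Suc m)"] by simp
  also have "\<dots> = (\<Sum>k=0..Suc m. gq k * gq (Suc (Suc m) - k)) + gq (Suc (Suc m))"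
    by (simp add: gq_0)
  also have "(\<Sum>k=0..Suc m. gq k * gq (Suc (Suc m) - k)) = gq (Suc (Suc m)) + (\<Sum>k=Suc 0..Suc m. gq k * gq (Suc (Suc m) - k))"
    by (simp add: sum.atLeast_Suc_atMost gq_0)
  also have "(\<Sum>k=Suc 0..Suc m. gq k * gq (Suc (Suc m) - k)) = (\<Sum>i=0..m. gq (Suc i) * gq (Suc (m - i)))"
  proof -
    have "(\<Sum>k=Suc 0..Suc m. gq k * gq (Suc (Suc m) - k)) = (\<Sum>i=0..m. gq (Suc i) * gq (Suc (Suc m) - Suc i))"
      by (rule sum.shift_bounds_cl_Suc_ivl)
    also have "\<dots> = (\<Sum>i=0..m. gq (Suc i) * gq (Suc (m - i)))"
      by (rule sum.cong) (auto simp: Suc_diff_le)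
    finally show ?thesis .
  qed
  also have "\<dots> = (\<Sum>i=0..m. 4 * (Dc i * Dc (m - i)))"
    by (rule sum.cong) (auto simp: Dc_def)
  finally have "0 = 2 * gq (Suc (Suc m)) + 4 * (\<Sum>i=0..m. Dc i * Dc (m - i))"
    by (simp add: sum_distrib_left)
  thus ?thesis by (simp add: Dc_def)
qed

definition bq :: "nat \<Rightarrow> real" where "bq m = Dc m * (real m + 1) / 4 ^ m"

lemma aux1: "(q::real) > 0 \<Longrightarrow> t > 0 \<Longrightarrow> d * t / q * u / (2 * t) = d * (2 * u) / (4 * q)"
  by (simp add: field_simps)

lemma bq_0: "bq 0 = 1" by (simp add: bq_def Dc_0)
lemma bq_Suc: "bq (Suc m) = bq m * (2 * real m + 1) / (2 * real m + 2)"
proof -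
  have e: "real (Suc m) + 1 = real m + 2" by simp
  have d: "Dc (Suc m) * (real m + 2) = Dc m * (4 * real m + 2)"
    unfolding Dc_Suc by simp
  have "bq (Suc m) = Dc (Suc m) * (real m + 2) / (4 * 4 ^ m)"
    unfolding bq_def e by simp
  also have "\<dots> = Dc m * (4 * real m + 2) / (4 * 4 ^ m)" unfolding d ..
  also have "\<dots> = bq m * (2 * real m + 1) / (2 * (real m + 1))"
    unfolding bq_def using aux1[of "4^m" "real m + 1" "Dc m" "2 * real m + 1"] by (simp add: algebra_simps)
  also have "2 * (real m + 1) = 2 * real m + 2" by simp
  finally show ?thesis .
qed

lemma bq_pos: "bq m > 0"
  by (induction m) (auto simp: bq_0 bq_Suc)

lemma bq_upper: "(bq m)^2 * (3 * real m + 1) \<le> 1"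
proof (induction m)
  case 0 thus ?case by (simp add: bq_0)
next
  case (Suc m)
  have key: "(2 * real m + 1)^2 * (3 * real m + 4) \<le> (2 * real m + 2)^2 * (3 * real m + 1)"
    by (simp add: power2_eq_square algebra_simps)
  have "(bq (Suc m))^2 * (3 * real (Suc m) + 1) = (bq m)^2 * ((2 * real m + 1)^2 * (3 * real m + 4)) / (2 * real m + 2)^2"
    by (simp add: bq_Suc power2_eq_square field_simps)
  also have "\<dots> \<le> (bq m)^2 * ((2 * real m + 2)^2 * (3 * real m + 1)) / (2 * real m + 2)^2"
    by (intro divide_right_mono mult_left_mono key) auto
  also have "\<dots> = (bq m)^2 * (3 * real m + 1)" by simp
  finally show ?case using Suc by simp
qed

lemma bq_lower: "(bq m)^2 * (4 * real m + 1) \<ge> 1"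
proof (induction m)
  case 0 thus ?case by (simp add: bq_0)
next
  case (Suc m)
  have key: "(2 * real m + 1)^2 * (4 * real m + 5) \<ge> (2 * real m + 2)^2 * (4 * real m + 1)"
    by (simp add: power2_eq_square algebra_simps)
  have "(bq (Suc m))^2 * (4 * real (Suc m) + 1) = (bq m)^2 * ((2 * real m + 1)^2 * (4 * real m + 5)) / (2 * real m + 2)^2"
    by (simp add: bq_Suc power2_eq_square field_simps)
  also have "\<dots> \<ge> (bq m)^2 * ((2 * real m + 2)^2 * (4 * real m + 1)) / (2 * real m + 2)^2"
    by (intro divide_right_mono mult_left_mono key) auto
  also have "(bq m)^2 * ((2 * real m + 2)^2 * (4 * real m + 1)) / (2 * real m + 2)^2 = (bq m)^2 * (4 * real m + 1)" by simp
  finally show ?case using Suc by simp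
qed

lemma bq_up2: "m > 0 \<Longrightarrow> bq m * sqrt (real m) \<le> 1"
proof -
  assume m: "m > 0"
  have "(bq m)^2 * real m \<le> (bq m)^2 * (3 * real m + 1)"
    by (intro mult_left_mono) auto
  with bq_upper[of m] have "(bq m)^2 * real m \<le> 1" by linarith
  hence "(bq m * sqrt (real m))^2 \<le> 1^2"
    by (simp add: power_mult_distrib)
  thus ?thesis
    by (rule power2_le_imp_le) (use bq_pos[of m] in auto)
qed

lemma bq_lo2: "m > 0 \<Longrightarrow> 3 * bq m * sqrt (real m) \<ge> 1"
proof -
  assume m: "m > 0"
  have "(bq m)^2 * (4 * real m + 1) \<le> (bq m)^2 * (9 * real m)"
    using m by (intro mult_left_mono) auto
  with bq_lower[of m] have "1 \<le> (bq m)^2 * (9 * real m)" by linarith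
  hence "1^2 \<le> (3 * bq m * sqrt (real m))^2"
    by (simp add: power_mult_distrib)
  thus ?thesis
    by (rule power2_le_imp_le) (use bq_pos[of m] in auto)
qed

definition Wt :: "nat \<Rightarrow> real" where
  "Wt m = (if m = 0 then 1 else real m * sqrt (real m))"

lemma Wt_pos: "Wt m > 0" by (simp add: Wt_def)

lemma aux2: "(q::real) > 0 \<Longrightarrow> t > 0 \<Longrightarrow> d = q * (d * t / q) / t"
  by simp

lemma Dc_eq: "Dc m = 4 ^ m * bq m / (real m + 1)"
  unfolding bq_def by (rule aux2) auto

lemma t1: "(q::real) * bb / (real m + 1) * (real m * sqrt (real m)) = q * (bb * sqrt (real m) * (real m / (real m + 1)))"
  by (simp add: algebra_simps)
lemma t2: "(q::real) * bb / (real m + 1) * (6 * (real m * sqrt (real m))) = q * (3 * bb * sqrt (real m) * (2 * real m / (real m + 1)))"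
  by (simp add: algebra_simps)

lemma Dc_upper: "Dc m \<le> 4 ^ m / Wt m"
proof (cases "m = 0")
  case True thus ?thesis by (simp add: Dc_0 Wt_def)
next
  case False
  hence m: "m > 0" by simp
  define a where "a = bq m * sqrt (real m)"
  define b where "b = real m / (real m + 1)"
  have a: "0 \<le> a" "a \<le> 1" using bq_up2[OF m] bq_pos[of m] unfolding a_def by auto
  have b: "0 \<le> b" "b \<le> 1" unfolding b_def by auto
  have ab: "a * b \<le> 1" using mult_mono[of a 1 b 1] a b by simp
  have "Dc m * Wt m = 4 ^ m * (a * b)"
    unfolding Dc_eq Wt_def a_def b_def using False t1 by simp
  also have "\<dots> \<le> 4 ^ m" using ab by simp
  finally show ?thesis using Wt_pos[of m] by (simp add: pos_le_divide_eq)
qed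

lemma Dc_lower: "4 ^ m / (6 * Wt m) \<le> Dc m"
proof (cases "m = 0")
  case True thus ?thesis by (simp add: Dc_0 Wt_def)
next
  case False
  hence m: "m > 0" by simp
  define a where "a = 3 * bq m * sqrt (real m)"
  define b where "b = 2 * real m / (real m + 1)"
  have a: "1 \<le> a" using bq_lo2[OF m] unfolding a_def by auto
  have b: "1 \<le> b" using m unfolding b_def by (simp add: field_simps)
  have ab: "1 \<le> a * b" using mult_mono[of 1 a 1 b] a b by simp
  have "Dc m * (6 * Wt m) = 4 ^ m * (a * b)"
    unfolding Dc_eq Wt_def a_def b_def using False t2 by simp
  also have "\<dots> \<ge> 4 ^ m" using ab by simp
  finally show ?thesis using Wt_pos[of m] by (simp add: pos_divide_le_eq)
qed

lemma Dc_pos: "Dc m > 0"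
proof -
  have "0 < 4 ^ m / (6 * Wt m)" using Wt_pos[of m] by simp
  thus ?thesis using Dc_lower[of m] by linarith
qed


definition arcsin :: "nat set \<Rightarrow> (nat \<times> nat) set" where
  "arcsin S = {(a,b). a < b \<and> a \<in> S \<and> b \<in> S}"

definition NC :: "nat set \<Rightarrow> (nat \<times> nat) set set" where
  "NC S = {M. M \<subseteq> arcsin S \<and> (\<forall>v\<in>S. \<exists>!p. p \<in> M \<and> (fst p = v \<or> snd p = v)) \<and> noncrossing M}"

lemma NC_sub: "M \<in> NC S \<Longrightarrow> (c,d) \<in> M \<Longrightarrow> c < d \<and> c \<in> S \<and> d \<in> S"
  unfolding NC_def arcsin_def by auto

lemma NC_uniq:
  assumes "M \<in> NC S" "v \<in> S" "p \<in> M" "q \<in> M" "fst p = v \<or> snd p = v" "fst q = v \<or> snd q = v"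
  shows "p = q"
  using assms unfolding NC_def by blast

lemma NC_ex:
  assumes "M \<in> NC S" "v \<in> S"
  obtains p where "p \<in> M" "fst p = v \<or> snd p = v"
  using assms unfolding NC_def by blast

lemma NC_nc: "M \<in> NC S \<Longrightarrow> a < b \<Longrightarrow> b < c \<Longrightarrow> c < d \<Longrightarrow> (a,c) \<in> M \<Longrightarrow> (b,d) \<in> M \<Longrightarrow> False"
  unfolding NC_def noncrossing_def by blast

lemma NCI:
  assumes "M \<subseteq> arcsin S"
    "\<And>v. v \<in> S \<Longrightarrow> \<exists>p\<in>M. fst p = v \<or> snd p = v"
    "\<And>v p q. v \<in> S \<Longrightarrow> p \<in> M \<Longrightarrow> q \<in> M \<Longrightarrow> fst p = v \<or> snd p = v \<Longrightarrow> fst q = v \<or> snd q = v \<Longrightarrow> p = q"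
    "\<And>a b c d. a < b \<Longrightarrow> b < c \<Longrightarrow> c < d \<Longrightarrow> (a,c) \<in> M \<Longrightarrow> (b,d) \<in> M \<Longrightarrow> False"
  shows "M \<in> NC S"
  unfolding NC_def noncrossing_def
proof (intro CollectI conjI ballI notI)
  show "M \<subseteq> arcsin S" by fact
next
  fix v assume v: "v \<in> S"
  from assms(2)[OF v] obtain p where "p \<in> M" "fst p = v \<or> snd p = v" by blast
  thus "\<exists>!p. p \<in> M \<and> (fst p = v \<or> snd p = v)" using assms(3)[OF v] by blast
next
  assume "\<exists>a b c d. a < b \<and> b < c \<and> c < d \<and> (a, c) \<in> M \<and> (b, d) \<in> M"
  thus False using assms(4) by blast
qed

lemma sep: "Z1 \<subseteq> A \<Longrightarrow> Z2 \<subseteq> B \<Longrightarrow> A \<inter> B = {} \<Longrightarrow> p \<notin> A \<Longrightarrow> insert p (Z1 \<union> Z2) \<inter> A = Z1"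
  by blast

context
  fixes S :: "nat set" and a b :: nat
  assumes ab: "a \<in> S" "b \<in> S" "a < b"
begin

definition "In = {v\<in>S. a < v \<and> v < b}"
definition "Out = {v\<in>S. v < a \<or> b < v}"

lemma classify:
  assumes M: "M \<in> NC S" and p: "(a,b) \<in> M" and q: "(c,d) \<in> M" "(c,d) \<noteq> (a,b)"
  shows "(c,d) \<in> arcsin In \<or> (c,d) \<in> arcsin Out"
proof -
  have cd: "c < d" "c \<in> S" "d \<in> S" using NC_sub[OF M q(1)] by auto
  have "c \<noteq> a" using NC_uniq[OF M ab(1) p q(1)] q(2) by auto
  moreover have "d \<noteq> a" using NC_uniq[OF M ab(1) p q(1)] q(2) by auto
  moreover have "c \<noteq> b" using NC_uniq[OF M ab(2) p q(1)] q(2) by auto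
  moreover have "d \<noteq> b" using NC_uniq[OF M ab(2) p q(1)] q(2) by auto
  moreover have "\<not> (a < c \<and> c < b \<and> b < d)" using NC_nc[OF M _ _ _ p q(1)] by blast
  moreover have "\<not> (c < a \<and> a < d \<and> d < b)" using NC_nc[OF M _ _ _ q(1) p] by blast
  ultimately show ?thesis using cd ab unfolding arcsin_def In_def Out_def by auto
qed

lemma G2:
  assumes M: "M \<in> NC S" and p: "(a,b) \<in> M"
  shows "M \<inter> arcsin In \<in> NC In" "M \<inter> arcsin Out \<in> NC Out"
    "M = insert (a,b) (M \<inter> arcsin In \<union> M \<inter> arcsin Out)"
proof -
  show "M = insert (a,b) (M \<inter> arcsin In \<union> M \<inter> arcsin Out)"
    using classify[OF M p] p by auto
next
  show "M \<inter> arcsin In \<in> NC In"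
  proof (rule NCI)
    show "M \<inter> arcsin In \<subseteq> arcsin In" by auto
  next
    fix v assume v: "v \<in> In"
    hence vS: "v \<in> S" unfolding In_def by auto
    obtain q where q: "q \<in> M" "fst q = v \<or> snd q = v" using NC_ex[OF M vS] by blast
    have "q \<noteq> (a,b)" using v q unfolding In_def by auto
    hence "q \<in> arcsin In \<or> q \<in> arcsin Out" using classify[OF M p, of "fst q" "snd q"] q by auto
    moreover have "q \<notin> arcsin Out" using v q unfolding In_def Out_def arcsin_def by auto
    ultimately show "\<exists>p\<in>M \<inter> arcsin In. fst p = v \<or> snd p = v" using q by auto
  next
    fix v p q assume "v \<in> In" "p \<in> M \<inter> arcsin In" "q \<in> M \<inter> arcsin In"
      "fst p = v \<or> snd p = v" "fst q = v \<or> snd q = v"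
    thus "p = q" using NC_uniq[OF M, of v p q] unfolding In_def by auto
  next
    fix a b c d assume "a < b" "b < c" "c < d" "(a, c) \<in> M \<inter> arcsin In" "(b, d) \<in> M \<inter> arcsin In"
    thus False using NC_nc[OF M] by blast
  qed
next
  show "M \<inter> arcsin Out \<in> NC Out"
  proof (rule NCI)
    show "M \<inter> arcsin Out \<subseteq> arcsin Out" by auto
  next
    fix v assume v: "v \<in> Out"
    hence vS: "v \<in> S" unfolding Out_def by auto
    obtain q where q: "q \<in> M" "fst q = v \<or> snd q = v" using NC_ex[OF M vS] by blast
    have "q \<noteq> (a,b)" using v q ab unfolding Out_def by auto
    hence "q \<in> arcsin In \<or> q \<in> arcsin Out" using classify[OF M p, of "fst q" "snd q"] q by auto
    moreover have "q \<notin> arcsin In" using v q unfolding In_def Out_def arcsin_def by auto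
    ultimately show "\<exists>p\<in>M \<inter> arcsin Out. fst p = v \<or> snd p = v" using q by auto
  next
    fix v p q assume "v \<in> Out" "p \<in> M \<inter> arcsin Out" "q \<in> M \<inter> arcsin Out"
      "fst p = v \<or> snd p = v" "fst q = v \<or> snd q = v"
    thus "p = q" using NC_uniq[OF M, of v p q] unfolding Out_def by auto
  next
    fix a b c d assume "a < b" "b < c" "c < d" "(a, c) \<in> M \<inter> arcsin Out" "(b, d) \<in> M \<inter> arcsin Out"
    thus False using NC_nc[OF M] by blast
  qed
qed

lemma G1:
  assumes M1: "M1 \<in> NC In" and M2: "M2 \<in> NC Out"
  shows "insert (a,b) (M1 \<union> M2) \<in> NC S"
proof (rule NCI)
  have "M1 \<subseteq> arcsin In" "M2 \<subseteq> arcsin Out" using M1 M2 unfolding NC_def by auto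
  thus "insert (a,b) (M1 \<union> M2) \<subseteq> arcsin S"
    using ab unfolding arcsin_def In_def Out_def by auto
next
  fix v assume v: "v \<in> S"
  consider "v = a" | "v = b" | "v \<in> In" | "v \<in> Out" using v unfolding In_def Out_def by force
  thus "\<exists>p\<in>insert (a,b) (M1 \<union> M2). fst p = v \<or> snd p = v"
  proof cases
    case 3 thus ?thesis using NC_ex[OF M1 3] by blast
  next
    case 4 thus ?thesis using NC_ex[OF M2 4] by blast
  qed auto
next
  fix v p q assume v: "v \<in> S" and p: "p \<in> insert (a,b) (M1 \<union> M2)" and q: "q \<in> insert (a,b) (M1 \<union> M2)"
    and pv: "fst p = v \<or> snd p = v" and qv: "fst q = v \<or> snd q = v"
  have loc1: "\<And>r. r \<in> M1 \<Longrightarrow> a < fst r \<and> fst r < b \<and> a < snd r \<and> snd r < b"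
    using M1 unfolding NC_def arcsin_def In_def by auto
  have loc2: "\<And>r. r \<in> M2 \<Longrightarrow> (fst r < a \<or> b < fst r) \<and> (snd r < a \<or> b < snd r)"
    using M2 unfolding NC_def arcsin_def Out_def by auto
  consider "v = a" | "v = b" | "v \<in> In" | "v \<in> Out" using v unfolding In_def Out_def by force
  thus "p = q"
  proof cases
    case 1
    have "\<And>r. r \<in> insert (a,b) (M1 \<union> M2) \<Longrightarrow> fst r = v \<or> snd r = v \<Longrightarrow> r = (a,b)"
      using 1 ab(3) by (auto dest!: loc1 loc2)
    thus ?thesis using p q pv qv by metis
  next
    case 2
    have "\<And>r. r \<in> insert (a,b) (M1 \<union> M2) \<Longrightarrow> fst r = v \<or> snd r = v \<Longrightarrow> r = (a,b)"
      using 2 ab(3) by (auto dest!: loc1 loc2)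
    thus ?thesis using p q pv qv by metis
  next
    case 3
    hence v3: "a < v" "v < b" unfolding In_def by auto
    have "\<And>r. r \<in> insert (a,b) (M1 \<union> M2) \<Longrightarrow> fst r = v \<or> snd r = v \<Longrightarrow> r \<in> M1"
      using v3 by (auto dest!: loc2)
    thus ?thesis using p q pv qv NC_uniq[OF M1 3] by metis
  next
    case 4
    hence v4: "v < a \<or> b < v" unfolding Out_def by auto
    have "\<And>r. r \<in> insert (a,b) (M1 \<union> M2) \<Longrightarrow> fst r = v \<or> snd r = v \<Longrightarrow> r \<in> M2"
      using v4 ab(3) by (auto dest!: loc1)
    thus ?thesis using p q pv qv NC_uniq[OF M2 4] by metis
  qed
next
  fix x y z w assume xyzw: "x < y" "y < z" "z < w" and p: "(x, z) \<in> insert (a,b) (M1 \<union> M2)"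
    and q: "(y, w) \<in> insert (a,b) (M1 \<union> M2)"
  have loc1: "\<And>c d. (c,d) \<in> M1 \<Longrightarrow> a < c \<and> c < b \<and> a < d \<and> d < b"
    using M1 unfolding NC_def arcsin_def In_def by auto
  have loc2: "\<And>c d. (c,d) \<in> M2 \<Longrightarrow> (c < a \<or> b < c) \<and> (d < a \<or> b < d)"
    using M2 unfolding NC_def arcsin_def Out_def by auto
  have n1: "\<not> ((x,z) \<in> M1 \<and> (y,w) \<in> M1)" using NC_nc[OF M1 xyzw] by blast
  have n2: "\<not> ((x,z) \<in> M2 \<and> (y,w) \<in> M2)" using NC_nc[OF M2 xyzw] by blast
  have p': "(x,z) = (a,b) \<or> (x,z) \<in> M1 \<or> (x,z) \<in> M2" using p by blast
  have q': "(y,w) = (a,b) \<or> (y,w) \<in> M1 \<or> (y,w) \<in> M2" using q by blast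
  from p' q' n1 n2 show False
    using xyzw by (auto dest!: loc1 loc2)
qed

lemma G:
  "bij_betw (\<lambda>(M1,M2). insert (a,b) (M1 \<union> M2)) (NC In \<times> NC Out) {M \<in> NC S. (a,b) \<in> M}"
proof (rule bij_betwI')
  fix X Y assume X: "X \<in> NC In \<times> NC Out" and Y: "Y \<in> NC In \<times> NC Out"
  obtain X1 X2 where Xe: "X = (X1,X2)" by force
  obtain Y1 Y2 where Ye: "Y = (Y1,Y2)" by force
  have sub: "X1 \<subseteq> arcsin In" "X2 \<subseteq> arcsin Out" "Y1 \<subseteq> arcsin In" "Y2 \<subseteq> arcsin Out"
    using X Y Xe Ye unfolding NC_def by auto
  have disj: "arcsin In \<inter> arcsin Out = {}" "(a,b) \<notin> arcsin In" "(a,b) \<notin> arcsin Out"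
    unfolding arcsin_def In_def Out_def by auto
  show "((\<lambda>(M1,M2). insert (a,b) (M1 \<union> M2)) X = (\<lambda>(M1,M2). insert (a,b) (M1 \<union> M2)) Y) = (X = Y)"
  proof
    assume e: "(\<lambda>(M1,M2). insert (a,b) (M1 \<union> M2)) X = (\<lambda>(M1,M2). insert (a,b) (M1 \<union> M2)) Y"
    hence e': "insert (a,b) (X1 \<union> X2) = insert (a,b) (Y1 \<union> Y2)" using Xe Ye by simp
    have d2: "arcsin Out \<inter> arcsin In = {}" using disj(1) by (simp add: Int_commute)
    have "X1 = insert (a,b) (X1 \<union> X2) \<inter> arcsin In" using sep[OF sub(1,2) disj(1,2)] by simp
    also have "\<dots> = Y1" unfolding e' using sep[OF sub(3,4) disj(1,2)] by simp
    finally have 1: "X1 = Y1" .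
    have "X2 = insert (a,b) (X2 \<union> X1) \<inter> arcsin Out" using sep[OF sub(2,1) d2 disj(3)] by simp
    also have "insert (a,b) (X2 \<union> X1) = insert (a,b) (X1 \<union> X2)" by (simp add: Un_commute)
    also have "\<dots> = insert (a,b) (Y2 \<union> Y1)" unfolding e' by (simp add: Un_commute)
    also have "\<dots> \<inter> arcsin Out = Y2" using sep[OF sub(4,3) d2 disj(3)] by simp
    finally show "X = Y" using 1 Xe Ye by simp
  qed simp
next
  fix X assume "X \<in> NC In \<times> NC Out"
  thus "(\<lambda>(M1,M2). insert (a,b) (M1 \<union> M2)) X \<in> {M \<in> NC S. (a,b) \<in> M}"
    using G1 by auto
next
  fix M assume "M \<in> {M \<in> NC S. (a,b) \<in> M}"
  hence M: "M \<in> NC S" "(a,b) \<in> M" by auto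
  show "\<exists>X\<in>NC In \<times> NC Out. M = (\<lambda>(M1,M2). insert (a,b) (M1 \<union> M2)) X"
  proof (rule bexI[of _ "(M \<inter> arcsin In, M \<inter> arcsin Out)"])
    show "M = (\<lambda>(M1,M2). insert (a,b) (M1 \<union> M2)) (M \<inter> arcsin In, M \<inter> arcsin Out)"
      unfolding prod.case by (rule G2(3)[OF M])
    show "(M \<inter> arcsin In, M \<inter> arcsin Out) \<in> NC In \<times> NC Out"
      using G2(1,2)[OF M] by simp
  qed
qed

end


definition cnt :: "nat \<Rightarrow> real" where
  "cnt N = (if even N then Dc (N div 2) else 0)"

lemma arcsin_fin: "finite S \<Longrightarrow> finite (arcsin S)"
proof -
  assume "finite S"
  hence "finite (S \<times> S)" by simp
  moreover have "arcsin S \<subseteq> S \<times> S" unfolding arcsin_def by auto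
  ultimately show ?thesis by (rule finite_subset[rotated])
qed

lemma NC_fin: "finite S \<Longrightarrow> finite (NC S)"
proof -
  assume "finite S"
  hence "finite (Pow (arcsin S))" using arcsin_fin by simp
  moreover have "NC S \<subseteq> Pow (arcsin S)" unfolding NC_def by auto
  ultimately show ?thesis by (rule finite_subset[rotated])
qed

lemma NC_empty: "NC {} = {{}}"
proof -
  have "M \<in> NC {} \<longleftrightarrow> M = {}" for M
  proof
    assume "M \<in> NC {}" thus "M = {}" unfolding NC_def arcsin_def by auto
  next
    assume "M = {}" thus "M \<in> NC {}" by (intro NCI) (auto simp: arcsin_def)
  qed
  thus ?thesis by auto
qed

definition rk :: "nat set \<Rightarrow> nat \<Rightarrow> nat" where "rk S b = card {u\<in>S. u < b}"

lemma rk_mono: "finite S \<Longrightarrow> b \<in> S \<Longrightarrow> c \<in> S \<Longrightarrow> b < c \<Longrightarrow> rk S b < rk S c"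
  unfolding rk_def by (rule psubset_card_mono) auto

lemma rk_inj: "finite S \<Longrightarrow> inj_on (rk S) S"
proof (rule inj_onI)
  fix b c assume f: "finite S" and b: "b \<in> S" and c: "c \<in> S" and e: "rk S b = rk S c"
  show "b = c"
  proof (cases b c rule: linorder_cases)
    case less thus ?thesis using rk_mono[OF f b c] e by simp
  next
    case greater thus ?thesis using rk_mono[OF f c b] e by simp
  qed
qed

lemma rk_lt: "finite S \<Longrightarrow> b \<in> S \<Longrightarrow> rk S b < card S"
  unfolding rk_def by (rule psubset_card_mono) auto

lemma rk_image: "finite S \<Longrightarrow> rk S ` S = {..<card S}"
proof -
  assume f: "finite S"
  have sub: "rk S ` S \<subseteq> {..<card S}" using rk_lt[OF f] by auto
  have "card (rk S ` S) = card {..<card S}" using card_image[OF rk_inj[OF f]] by simp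
  thus ?thesis using sub by (intro card_subset_eq) auto
qed

lemma NC_min_arc:
  assumes f: "finite S" and ne: "S \<noteq> {}" and M: "M \<in> NC S"
  shows "\<exists>b\<in>S - {Min S}. (Min S, b) \<in> M"
proof -
  have aS: "Min S \<in> S" using f ne by simp
  obtain p where p: "p \<in> M" "fst p = Min S \<or> snd p = Min S" using NC_ex[OF M aS] by blast
  obtain c d where pe: "p = (c,d)" by force
  have cd: "c < d" "c \<in> S" "d \<in> S" using NC_sub[OF M] p pe by auto
  have "c \<ge> Min S" using f cd by simp
  hence "c = Min S" using p pe cd by auto
  thus ?thesis using p pe cd by auto
qed

lemma card_rec:
  assumes f: "finite S" and ne: "S \<noteq> {}"
  defines "a \<equiv> Min S"
  shows "card (NC S) = (\<Sum>b\<in>S - {a}. card (NC {v\<in>S. a < v \<and> v < b}) * card (NC {v\<in>S. b < v}))"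
proof -
  have aS: "a \<in> S" using f ne unfolding a_def by simp
  have amin: "\<And>v. v \<in> S \<Longrightarrow> a \<le> v" using f unfolding a_def by simp
  have U: "NC S = (\<Union>b\<in>S - {a}. {M \<in> NC S. (a,b) \<in> M})"
    using NC_min_arc[OF f ne] unfolding a_def by blast
  have "card (NC S) = card (\<Union>b\<in>S - {a}. {M \<in> NC S. (a,b) \<in> M})"
    using U by (rule arg_cong)
  also have "\<dots> = (\<Sum>b\<in>S - {a}. card {M \<in> NC S. (a,b) \<in> M})"
  proof (rule card_UN_disjoint)
    show "finite (S - {a})" using f by simp
    show "\<forall>b\<in>S - {a}. finite {M \<in> NC S. (a, b) \<in> M}" using NC_fin[OF f] by simp
    show "\<forall>b\<in>S - {a}. \<forall>c\<in>S - {a}. b \<noteq> c \<longrightarrow> {M \<in> NC S. (a, b) \<in> M} \<inter> {M \<in> NC S. (a, c) \<in> M} = {}"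
    proof (intro ballI impI)
      fix b c assume "b \<in> S - {a}" "c \<in> S - {a}" "b \<noteq> c"
      show "{M \<in> NC S. (a, b) \<in> M} \<inter> {M \<in> NC S. (a, c) \<in> M} = {}"
      proof (rule equals0I)
        fix M assume "M \<in> {M \<in> NC S. (a, b) \<in> M} \<inter> {M \<in> NC S. (a, c) \<in> M}"
        hence M: "M \<in> NC S" "(a,b) \<in> M" "(a,c) \<in> M" by auto
        have "(a,b) = (a,c)" by (rule NC_uniq[OF M(1) aS M(2) M(3)]) auto
        thus False using \<open>b \<noteq> c\<close> by simp
      qed
    qed
  qed
  also have "\<dots> = (\<Sum>b\<in>S - {a}. card (NC {v\<in>S. a < v \<and> v < b}) * card (NC {v\<in>S. b < v}))"
  proof (rule sum.cong[OF refl])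
    fix b assume b: "b \<in> S - {a}"
    have ab: "a \<in> S" "b \<in> S" "a < b" using b aS amin by (auto simp: le_neq_implies_less)
    have "card {M \<in> NC S. (a,b) \<in> M} = card (NC (In S a b) \<times> NC (Out S a b))"
      using bij_betw_same_card[OF G[OF ab]] by simp
    also have "Out S a b = {v\<in>S. b < v}" unfolding Out_def[OF ab] using amin by force
    also have "In S a b = {v\<in>S. a < v \<and> v < b}" unfolding In_def[OF ab] ..
    finally show "card {M \<in> NC S. (a,b) \<in> M} = card (NC {v\<in>S. a < v \<and> v < b}) * card (NC {v\<in>S. b < v})"
      by (simp add: card_cartesian_product)
  qed
  finally show ?thesis .
qed

lemma sum_split_parity:
  "(\<Sum>t<2*m+1. h t) = (\<Sum>i\<le>m. h (2*i)) + (\<Sum>i<m. h (2*i+1))" for h :: "nat \<Rightarrow> real"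
proof (induction m)
  case 0 thus ?case by simp
next
  case (Suc m)
  have e: "2 * Suc m + 1 = Suc (Suc (2*m+1))" by simp
  show ?case unfolding e using Suc by (simp add: algebra_simps)
qed

lemma cnt_odd: "odd N \<Longrightarrow> cnt N = 0" by (simp add: cnt_def)

lemma cnt_rec: "N \<ge> 1 \<Longrightarrow> (\<Sum>j\<in>{1..<N}. cnt (j-1) * cnt (N-j-1)) = cnt N"
proof -
  assume N: "N \<ge> 1"
  then obtain K where K: "N = Suc K" by (cases N) auto
  have "(\<Sum>j\<in>{1..<N}. cnt (j-1) * cnt (N-j-1)) = (\<Sum>j\<in>{Suc 0..<Suc K}. cnt (j-1) * cnt (Suc K-j-1))"
    unfolding K by simp
  also have "\<dots> = (\<Sum>i\<in>{0..<K}. cnt i * cnt (K - 1 - i))"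
    by (subst sum.shift_bounds_Suc_ivl) simp
  finally have eq: "(\<Sum>j\<in>{1..<N}. cnt (j-1) * cnt (N-j-1)) = (\<Sum>i\<in>{0..<K}. cnt i * cnt (K - 1 - i))" .
  show ?thesis
  proof (cases "even K")
    case True
    then obtain m where m: "K = 2*m" by blast
    have "(\<Sum>i\<in>{0..<K}. cnt i * cnt (K - 1 - i)) = 0"
    proof (rule sum.neutral, rule ballI)
      fix i assume i: "i \<in> {0..<K}"
      have "odd i \<or> odd (K - 1 - i)" using i m by (cases "even i") auto
      thus "cnt i * cnt (K - 1 - i) = 0" by (elim disjE) (simp_all add: cnt_odd)
    qed
    moreover have "cnt N = 0" using K m by (simp add: cnt_def)
    ultimately show ?thesis using eq by simp
  next
    case False
    then obtain m where m: "K = 2*m+1" using oddE by blast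
    have "(\<Sum>i\<in>{0..<K}. cnt i * cnt (K - 1 - i)) = (\<Sum>i<2*m+1. cnt i * cnt (2*m - i))"
      unfolding m by (simp add: atLeast0LessThan)
    also have "\<dots> = (\<Sum>i\<le>m. cnt (2*i) * cnt (2*m - 2*i)) + (\<Sum>i<m. cnt (2*i+1) * cnt (2*m - (2*i+1)))"
      by (rule sum_split_parity)
    also have "(\<Sum>i<m. cnt (2*i+1) * cnt (2*m - (2*i+1))) = 0"
      by (rule sum.neutral) (simp add: cnt_odd)
    also have "(\<Sum>i\<le>m. cnt (2*i) * cnt (2*m - 2*i)) = (\<Sum>i=0..m. Dc i * Dc (m - i))"
    proof -
      have "(\<Sum>i\<le>m. cnt (2*i) * cnt (2*m - 2*i)) = (\<Sum>i\<le>m. Dc i * Dc (m - i))"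
      proof (rule sum.cong[OF refl])
        fix i assume "i \<in> {..m}"
        have "2*m - 2*i = 2*(m-i)" by simp
        thus "cnt (2*i) * cnt (2*m - 2*i) = Dc i * Dc (m - i)" by (simp add: cnt_def)
      qed
      thus ?thesis by (simp add: atMost_atLeast0)
    qed
    also have "\<dots> = Dc (Suc m)" by (rule Dc_conv)
    also have "\<dots> = cnt N" using K m by (simp add: cnt_def)
    finally show ?thesis using eq by simp
  qed
qed

lemma NC_count: "finite S \<Longrightarrow> real (card (NC S)) = cnt (card S)"
proof (induction "card S" arbitrary: S rule: less_induct)
  case less
  note f = less.prems
  show ?case
  proof (cases "S = {}")
    case True thus ?thesis by (simp add: NC_empty cnt_def Dc_0)
  next
    case ne: False
    define a where "a = Min S"
    define N where "N = card S"
    have aS: "a \<in> S" using f ne unfolding a_def by simp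
    have amin: "\<And>v. v \<in> S \<Longrightarrow> a \<le> v" using f unfolding a_def by simp
    have N1: "N \<ge> 1" using f ne unfolding N_def by (simp add: Suc_leI card_gt_0_iff)
    have ra: "rk S a = 0" unfolding rk_def using amin by (simp add: not_less[symmetric]) 
    have key: "real (card (NC {v\<in>S. a < v \<and> v < b})) * real (card (NC {v\<in>S. b < v}))
        = cnt (rk S b - 1) * cnt (N - rk S b - 1)" if b: "b \<in> S - {a}" for b
    proof -
      have ab: "a < b" using b amin by (simp add: le_neq_implies_less)
      have s1: "{u\<in>S. u < b} = insert a {v\<in>S. a < v \<and> v < b}" using ab aS amin by (auto simp: le_neq_implies_less)
      have c1: "card {v\<in>S. a < v \<and> v < b} = rk S b - 1"
        unfolding rk_def s1 using f by simp
      have s2: "S = {u\<in>S. u < b} \<union> insert b {v\<in>S. b < v}" using b by auto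
      have "card S = card {u\<in>S. u < b} + card (insert b {v\<in>S. b < v})"
        by (subst s2, rule card_Un_disjoint) (use f in auto)
      hence c2: "card {v\<in>S. b < v} = N - rk S b - 1" unfolding N_def rk_def using f by simp
      have lt1: "card {v\<in>S. a < v \<and> v < b} < card S"
      proof (rule psubset_card_mono[OF f])
        show "{v\<in>S. a < v \<and> v < b} \<subset> S" using aS by blast
      qed
      have lt2: "card {v\<in>S. b < v} < card S"
      proof (rule psubset_card_mono[OF f])
        show "{v\<in>S. b < v} \<subset> S" using aS ab by (simp add: psubset_eq) (metis (mono_tags, lifting) mem_Collect_eq less_asym)
      qed
      have h1: "real (card (NC {v\<in>S. a < v \<and> v < b})) = cnt (card {v\<in>S. a < v \<and> v < b})"
        by (rule less.hyps[OF lt1]) (use f in simp)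
      have h2: "real (card (NC {v\<in>S. b < v})) = cnt (card {v\<in>S. b < v})"
        by (rule less.hyps[OF lt2]) (use f in simp)
      show ?thesis unfolding h1 h2 c1 c2 ..
    qed
    have "real (card (NC S)) = (\<Sum>b\<in>S - {a}. real (card (NC {v\<in>S. a < v \<and> v < b})) * real (card (NC {v\<in>S. b < v})))"
      using card_rec[OF f ne] unfolding a_def by simp
    also have "\<dots> = (\<Sum>b\<in>S - {a}. (\<lambda>j. cnt (j - 1) * cnt (N - j - 1)) (rk S b))"
      by (rule sum.cong[OF refl]) (simp add: key)
    also have "\<dots> = (\<Sum>j\<in>rk S ` (S - {a}). cnt (j - 1) * cnt (N - j - 1))"
      using sum.reindex[OF inj_on_subset[OF rk_inj[OF f], of "S - {a}"], of "\<lambda>j. cnt (j-1) * cnt (N-j-1)"] by auto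
    also have "rk S ` (S - {a}) = {1..<N}"
    proof -
      have "rk S ` (S - {a}) = rk S ` S - {rk S a}"
        using inj_on_image_set_diff[OF rk_inj[OF f], of "{a}"] aS by auto
      also have "\<dots> = {..<N} - {0}" unfolding rk_image[OF f] ra N_def ..
      finally show ?thesis by auto
    qed
    also have "(\<Sum>j\<in>{1..<N}. cnt (j - 1) * cnt (N - j - 1)) = cnt N" by (rule cnt_rec[OF N1])
    finally show ?thesis unfolding N_def .
  qed
qed


definition face :: "nat set \<Rightarrow> (nat \<times> nat) set \<Rightarrow> nat \<times> nat \<Rightarrow> nat set" where
  "face S C p = {v\<in>S. fst p < v \<and> v < snd p \<and>
     (\<forall>q\<in>C. q \<noteq> p \<and> {fst q..snd q} \<subseteq> {fst p..snd p} \<longrightarrow> v \<notin> {fst q..snd q})}"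

definition face0 :: "nat set \<Rightarrow> (nat \<times> nat) set \<Rightarrow> nat set" where
  "face0 S C = {v\<in>S. \<forall>q\<in>C. v \<notin> {fst q..snd q}}"

definition good :: "nat set \<Rightarrow> (nat \<times> nat) set \<Rightarrow> bool" where
  "good S C \<longleftrightarrow> finite C \<and> (\<forall>q\<in>C. fst q < snd q \<and> fst q \<in> S \<and> snd q \<in> S) \<and>
     (\<forall>p\<in>C. \<forall>q\<in>C. p \<noteq> q \<longrightarrow> fst p \<noteq> fst q \<and> fst p \<noteq> snd q \<and> snd p \<noteq> snd q) \<and>
     noncrossing C"

lemma good_sub: "good S C \<Longrightarrow> C' \<subseteq> C \<Longrightarrow> (\<forall>q\<in>C'. fst q \<in> S' \<and> snd q \<in> S') \<Longrightarrow> good S' C'"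
proof -
  assume g: "good S C" and sub: "C' \<subseteq> C" and e: "\<forall>q\<in>C'. fst q \<in> S' \<and> snd q \<in> S'"
  have "finite C'" using g sub finite_subset unfolding good_def by blast
  moreover have "\<forall>q\<in>C'. fst q < snd q \<and> fst q \<in> S' \<and> snd q \<in> S'" using g sub e unfolding good_def by blast
  moreover have "\<forall>p\<in>C'. \<forall>q\<in>C'. p \<noteq> q \<longrightarrow> fst p \<noteq> fst q \<and> fst p \<noteq> snd q \<and> snd p \<noteq> snd q"
    using g sub unfolding good_def by blast
  moreover have "noncrossing C'" using g sub unfolding good_def noncrossing_def by blast
  ultimately show ?thesis unfolding good_def by blast
qed

context
  fixes S C a b
  assumes fS: "finite S" and gd: "good S C" and pC: "(a,b) \<in> C" and amin: "\<forall>q\<in>C. a \<le> fst q"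
begin

definition "Cin = {q\<in>C. a < fst q \<and> fst q < b}"
definition "Cout = {q\<in>C. b < fst q}"

lemma ab: "a \<in> S" "b \<in> S" "a < b"
  using gd pC unfolding good_def by auto

lemma In_eq: "In S a b = {v\<in>S. a < v \<and> v < b}" using In_def[OF ab] .
lemma Out_eq: "Out S a b = {v\<in>S. v < a \<or> b < v}" using Out_def[OF ab] .

lemma hC: "q \<in> C \<Longrightarrow> q = (a,b) \<or> q \<in> Cin \<or> q \<in> Cout"
proof -
  assume q: "q \<in> C"
  { assume ne: "q \<noteq> (a,b)"
    have "fst q \<noteq> a" "fst q \<noteq> b" using gd pC q ne unfolding good_def by force+
    moreover have "a \<le> fst q" using amin q by auto
    ultimately have "q \<in> Cin \<or> q \<in> Cout" using q unfolding Cin_def Cout_def by auto }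
  thus ?thesis by blast
qed

lemma hCin: "q \<in> Cin \<Longrightarrow> q \<in> C \<and> a < fst q \<and> fst q < snd q \<and> snd q < b"
proof -
  assume q: "q \<in> Cin"
  hence qC: "q \<in> C" and q1: "a < fst q" "fst q < b" unfolding Cin_def by auto
  have lt: "fst q < snd q" using gd qC unfolding good_def by auto
  have ne: "q \<noteq> (a,b)" using q1 by auto
  have "snd q \<noteq> b" using gd pC qC ne unfolding good_def by force
  moreover have "\<not> (a < fst q \<and> fst q < b \<and> b < snd q)"
    using gd pC qC unfolding good_def noncrossing_def by (metis prod.collapse)
  ultimately show ?thesis using qC q1 lt by auto
qed

lemma hCout: "q \<in> Cout \<Longrightarrow> q \<in> C \<and> b < fst q \<and> fst q < snd q"
  using gd unfolding Cout_def good_def by auto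

lemma Cdecomp: "C = insert (a,b) (Cin \<union> Cout)" "(a,b) \<notin> Cin" "(a,b) \<notin> Cout" "Cin \<inter> Cout = {}"
proof -
  show "(a,b) \<notin> Cin" "(a,b) \<notin> Cout" unfolding Cin_def Cout_def using ab(3) by auto
  show "Cin \<inter> Cout = {}" unfolding Cin_def Cout_def by auto
  show "C = insert (a,b) (Cin \<union> Cout)"
  proof
    show "C \<subseteq> insert (a,b) (Cin \<union> Cout)" using hC by blast
    show "insert (a,b) (Cin \<union> Cout) \<subseteq> C" using pC unfolding Cin_def Cout_def by auto
  qed
qed

lemma inS: "q \<in> C \<Longrightarrow> fst q \<in> S \<and> snd q \<in> S" using gd unfolding good_def by auto

lemma Cin_arcs: "Cin \<subseteq> arcsin (In S a b)"
proof
  fix q assume q: "q \<in> Cin"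
  obtain c d where qe: "q = (c,d)" by force
  show "q \<in> arcsin (In S a b)" using hCin[OF q] inS[of q] qe unfolding arcsin_def In_eq by auto
qed

lemma Cout_arcs: "Cout \<subseteq> arcsin (Out S a b)"
proof
  fix q assume q: "q \<in> Cout"
  obtain c d where qe: "q = (c,d)" by force
  show "q \<in> arcsin (Out S a b)" using hCout[OF q] inS[of q] qe unfolding arcsin_def Out_eq by auto
qed

lemma good_in: "good (In S a b) Cin"
  by (rule good_sub[OF gd]) (use Cin_arcs Cdecomp in \<open>auto simp: arcsin_def\<close>)

lemma good_out: "good (Out S a b) Cout"
  by (rule good_sub[OF gd]) (use Cout_arcs Cdecomp in \<open>auto simp: arcsin_def\<close>)

lemma card_Cin: "card Cin < card C"
proof (rule psubset_card_mono)
  show "finite C" using gd unfolding good_def by simp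
  show "Cin \<subset> C" using Cdecomp(1,2) by blast
qed

lemma card_Cout: "card Cout < card C"
proof (rule psubset_card_mono)
  show "finite C" using gd unfolding good_def by simp
  show "Cout \<subset> C" using Cdecomp(1,3) by blast
qed

lemma face_in0: "face0 (In S a b) Cin = face S C (a,b)"
proof (rule set_eqI, rule iffI)
  fix v assume v: "v \<in> face0 (In S a b) Cin"
  hence vS: "v \<in> S" "a < v" "v < b" and nin: "\<forall>q\<in>Cin. v \<notin> {fst q..snd q}"
    unfolding face0_def In_eq by auto
  have "\<forall>q\<in>C. q \<noteq> (a,b) \<and> {fst q..snd q} \<subseteq> {fst (a,b)..snd (a,b)} \<longrightarrow> v \<notin> {fst q..snd q}"
  proof (intro ballI impI)
    fix q assume q: "q \<in> C" and h: "q \<noteq> (a,b) \<and> {fst q..snd q} \<subseteq> {fst (a,b)..snd (a,b)}"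
    from hC[OF q] h have "q \<in> Cin \<or> q \<in> Cout" by blast
    thus "v \<notin> {fst q..snd q}"
    proof
      assume "q \<in> Cin" thus ?thesis using nin by blast
    next
      assume "q \<in> Cout" thus ?thesis using hCout[of q] vS by auto
    qed
  qed
  thus "v \<in> face S C (a,b)" unfolding face_def using vS by simp
next
  fix v assume v: "v \<in> face S C (a,b)"
  hence vS: "v \<in> S" "a < v" "v < b"
    and h: "\<forall>q\<in>C. q \<noteq> (a,b) \<and> {fst q..snd q} \<subseteq> {a..b} \<longrightarrow> v \<notin> {fst q..snd q}"
    unfolding face_def by auto
  have "\<forall>q\<in>Cin. v \<notin> {fst q..snd q}"
  proof
    fix q assume q: "q \<in> Cin"
    have "q \<noteq> (a,b)" using q Cdecomp(2) by blast
    moreover have "{fst q..snd q} \<subseteq> {a..b}" using hCin[OF q] by auto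
    ultimately show "v \<notin> {fst q..snd q}" using h hCin[OF q] by blast
  qed
  thus "v \<in> face0 (In S a b) Cin" unfolding face0_def In_eq using vS by simp
qed

lemma face_in: "q \<in> Cin \<Longrightarrow> face (In S a b) Cin q = face S C q"
proof (rule set_eqI, rule iffI)
  fix v assume qi: "q \<in> Cin" and v: "v \<in> face (In S a b) Cin q"
  note hq = hCin[OF qi]
  from v have vS: "v \<in> S" "fst q < v" "v < snd q"
    and nin: "\<forall>r\<in>Cin. r \<noteq> q \<and> {fst r..snd r} \<subseteq> {fst q..snd q} \<longrightarrow> v \<notin> {fst r..snd r}"
    unfolding face_def In_eq by auto
  have "\<forall>r\<in>C. r \<noteq> q \<and> {fst r..snd r} \<subseteq> {fst q..snd q} \<longrightarrow> v \<notin> {fst r..snd r}"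
  proof (intro ballI impI)
    fix r assume r: "r \<in> C" and h: "r \<noteq> q \<and> {fst r..snd r} \<subseteq> {fst q..snd q}"
    from hC[OF r] show "v \<notin> {fst r..snd r}"
    proof (elim disjE)
      assume "r = (a,b)"
      hence "a \<in> {fst q..snd q}" using h ab(3) by auto
      thus ?thesis using hq by auto
    next
      assume "r \<in> Cin" thus ?thesis using nin h by blast
    next
      assume "r \<in> Cout" thus ?thesis using hCout[of r] vS hq by auto
    qed
  qed
  thus "v \<in> face S C q" unfolding face_def using vS by simp
next
  fix v assume qi: "q \<in> Cin" and v: "v \<in> face S C q"
  note hq = hCin[OF qi]
  from v have vS: "v \<in> S" "fst q < v" "v < snd q"
    and h: "\<forall>r\<in>C. r \<noteq> q \<and> {fst r..snd r} \<subseteq> {fst q..snd q} \<longrightarrow> v \<notin> {fst r..snd r}"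
    unfolding face_def by auto
  have "\<forall>r\<in>Cin. r \<noteq> q \<and> {fst r..snd r} \<subseteq> {fst q..snd q} \<longrightarrow> v \<notin> {fst r..snd r}"
    using h hCin by blast
  moreover have "v \<in> In S a b" unfolding In_eq using vS hq by auto
  ultimately show "v \<in> face (In S a b) Cin q" unfolding face_def using vS by simp
qed

lemma face_out0: "face0 (Out S a b) Cout = face0 S C"
proof (rule set_eqI, rule iffI)
  fix v assume v: "v \<in> face0 (Out S a b) Cout"
  hence vS: "v \<in> S" "v < a \<or> b < v" and nin: "\<forall>q\<in>Cout. v \<notin> {fst q..snd q}"
    unfolding face0_def Out_eq by auto
  have "\<forall>q\<in>C. v \<notin> {fst q..snd q}"
  proof
    fix q assume q: "q \<in> C"
    from hC[OF q] show "v \<notin> {fst q..snd q}"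
    proof (elim disjE)
      assume "q = (a,b)" thus ?thesis using vS by auto
    next
      assume "q \<in> Cin" thus ?thesis using hCin[of q] vS by auto
    next
      assume "q \<in> Cout" thus ?thesis using nin by blast
    qed
  qed
  thus "v \<in> face0 S C" unfolding face0_def using vS by simp
next
  fix v assume v: "v \<in> face0 S C"
  hence vS: "v \<in> S" and h: "\<forall>q\<in>C. v \<notin> {fst q..snd q}" unfolding face0_def by auto
  have "v \<notin> {a..b}" using h pC by force
  hence "v < a \<or> b < v" by auto
  moreover have "\<forall>q\<in>Cout. v \<notin> {fst q..snd q}" using h hCout by blast
  ultimately show "v \<in> face0 (Out S a b) Cout" unfolding face0_def Out_eq using vS by simp
qed

lemma face_out: "q \<in> Cout \<Longrightarrow> face (Out S a b) Cout q = face S C q"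
proof (rule set_eqI, rule iffI)
  fix v assume qi: "q \<in> Cout" and v: "v \<in> face (Out S a b) Cout q"
  note hq = hCout[OF qi]
  from v have vS: "v \<in> S" "fst q < v" "v < snd q"
    and nin: "\<forall>r\<in>Cout. r \<noteq> q \<and> {fst r..snd r} \<subseteq> {fst q..snd q} \<longrightarrow> v \<notin> {fst r..snd r}"
    unfolding face_def Out_eq by auto
  have "\<forall>r\<in>C. r \<noteq> q \<and> {fst r..snd r} \<subseteq> {fst q..snd q} \<longrightarrow> v \<notin> {fst r..snd r}"
  proof (intro ballI impI)
    fix r assume r: "r \<in> C" and h: "r \<noteq> q \<and> {fst r..snd r} \<subseteq> {fst q..snd q}"
    from hC[OF r] show "v \<notin> {fst r..snd r}"
    proof (elim disjE)
      assume "r = (a,b)"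
      hence "a \<in> {fst q..snd q}" using h ab(3) by auto
      thus ?thesis using hq ab(3) by auto
    next
      assume "r \<in> Cin" thus ?thesis using hCin[of r] vS hq by auto
    next
      assume "r \<in> Cout" thus ?thesis using nin h by blast
    qed
  qed
  thus "v \<in> face S C q" unfolding face_def using vS by simp
next
  fix v assume qi: "q \<in> Cout" and v: "v \<in> face S C q"
  note hq = hCout[OF qi]
  from v have vS: "v \<in> S" "fst q < v" "v < snd q"
    and h: "\<forall>r\<in>C. r \<noteq> q \<and> {fst r..snd r} \<subseteq> {fst q..snd q} \<longrightarrow> v \<notin> {fst r..snd r}"
    unfolding face_def by auto
  have "\<forall>r\<in>Cout. r \<noteq> q \<and> {fst r..snd r} \<subseteq> {fst q..snd q} \<longrightarrow> v \<notin> {fst r..snd r}"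
    using h hCout by blast
  moreover have "v \<in> Out S a b" unfolding Out_eq using vS hq by auto
  ultimately show "v \<in> face (Out S a b) Cout q" unfolding face_def using vS by simp
qed

lemma card_split: "card S = card (In S a b) + card (Out S a b) + 2"
proof -
  have e: "S = In S a b \<union> (Out S a b \<union> {a,b})" unfolding In_eq Out_eq using ab by auto
  have "card S = card (In S a b) + card (Out S a b \<union> {a,b})"
    by (subst e, rule card_Un_disjoint) (use fS in \<open>auto simp: In_eq Out_eq\<close>)
  also have "card (Out S a b \<union> {a,b}) = card (Out S a b) + card {a,b}"
    by (rule card_Un_disjoint) (use fS ab in \<open>auto simp: Out_eq\<close>)
  finally show ?thesis using ab(3) by simp
qed

lemma count_split:
  "card {M \<in> NC S. C \<subseteq> M} = card {M1 \<in> NC (In S a b). Cin \<subseteq> M1} * card {M2 \<in> NC (Out S a b). Cout \<subseteq> M2}"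
proof -
  let ?f = "\<lambda>(M1,M2). insert (a,b) (M1 \<union> M2)"
  let ?A = "{M1 \<in> NC (In S a b). Cin \<subseteq> M1} \<times> {M2 \<in> NC (Out S a b). Cout \<subseteq> M2}"
  have bij: "bij_betw ?f (NC (In S a b) \<times> NC (Out S a b)) {M \<in> NC S. (a,b) \<in> M}"
    by (rule G[OF ab])
  have inj: "inj_on ?f ?A"
    by (rule inj_on_subset[OF bij_betw_imp_inj_on[OF bij]]) auto
  have img: "?f ` ?A = {M \<in> NC S. C \<subseteq> M}"
  proof
    show "?f ` ?A \<subseteq> {M \<in> NC S. C \<subseteq> M}"
    proof
      fix M assume "M \<in> ?f ` ?A"
      then obtain M1 M2 where M: "M = insert (a,b) (M1 \<union> M2)" "M1 \<in> NC (In S a b)" "Cin \<subseteq> M1"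
        "M2 \<in> NC (Out S a b)" "Cout \<subseteq> M2" by auto
      have "M \<in> NC S" unfolding M(1) by (rule G1[OF ab M(2) M(4)])
      moreover have "C \<subseteq> M" unfolding M(1) using Cdecomp(1) M(3,5) by blast
      ultimately show "M \<in> {M \<in> NC S. C \<subseteq> M}" by simp
    qed
  next
    show "{M \<in> NC S. C \<subseteq> M} \<subseteq> ?f ` ?A"
    proof
      fix M assume "M \<in> {M \<in> NC S. C \<subseteq> M}"
      hence M: "M \<in> NC S" "C \<subseteq> M" by auto
      have p: "(a,b) \<in> M" using M(2) pC by blast
      note g = G2[OF ab M(1) p]
      have "Cin \<subseteq> M \<inter> arcsin (In S a b)" using M(2) Cin_arcs Cdecomp(1) by blast
      moreover have "Cout \<subseteq> M \<inter> arcsin (Out S a b)" using M(2) Cout_arcs Cdecomp(1) by blast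
      ultimately have "(M \<inter> arcsin (In S a b), M \<inter> arcsin (Out S a b)) \<in> ?A" using g(1,2) by simp
      moreover have "M = ?f (M \<inter> arcsin (In S a b), M \<inter> arcsin (Out S a b))"
        unfolding prod.case by (rule g(3))
      ultimately show "M \<in> ?f ` ?A" by (rule rev_image_eqI)
    qed
  qed
  have "card {M \<in> NC S. C \<subseteq> M} = card ?A" unfolding img[symmetric] by (rule card_image[OF inj])
  thus ?thesis by (simp add: card_cartesian_product)
qed

lemma ivl_in: "q \<in> Cin \<Longrightarrow> {v\<in>In S a b. fst q \<le> v \<and> v \<le> snd q} = {v\<in>S. fst q \<le> v \<and> v \<le> snd q}"
  using hCin[of q] unfolding In_eq by auto

lemma ivl_out: "q \<in> Cout \<Longrightarrow> {v\<in>Out S a b. fst q \<le> v \<and> v \<le> snd q} = {v\<in>S. fst q \<le> v \<and> v \<le> snd q}"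
  using hCout[of q] unfolding Out_eq by auto

lemma card_ab: "card {v\<in>S. fst (a,b) \<le> v \<and> v \<le> snd (a,b)} = card (In S a b) + 2"
proof -
  have e: "{v\<in>S. fst (a,b) \<le> v \<and> v \<le> snd (a,b)} = In S a b \<union> {a,b}" unfolding In_eq using ab by auto
  show ?thesis unfolding e by (subst card_Un_disjoint) (use fS ab in \<open>auto simp: In_eq\<close>)
qed

end

lemma decomp:
  "finite S \<Longrightarrow> good S C \<Longrightarrow>
    real (card {M \<in> NC S. C \<subseteq> M}) = cnt (card (face0 S C)) * (\<Prod>p\<in>C. cnt (card (face S C p)))
  \<and> card S = card (face0 S C) + (\<Sum>p\<in>C. card (face S C p) + 2)
  \<and> (even (card S) \<and> (\<forall>p\<in>C. even (card {v\<in>S. fst p \<le> v \<and> v \<le> snd p})) \<longrightarrow>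
       even (card (face0 S C)) \<and> (\<forall>p\<in>C. even (card (face S C p))))"
proof (induction "card C" arbitrary: S C rule: less_induct)
  case less
  note fS = less.prems(1) and gd = less.prems(2)
  have fC: "finite C" using gd unfolding good_def by simp
  show ?case
  proof (cases "C = {}")
    case True
    have f0: "face0 S C = S" unfolding face0_def True by simp
    show ?thesis unfolding f0 using NC_count[OF fS] True by simp
  next
    case ne: False
    define a where "a = Min (fst ` C)"
    have "a \<in> fst ` C" unfolding a_def using fC ne by simp
    then obtain b where pC: "(a,b) \<in> C" by force
    have amin: "\<forall>q\<in>C. a \<le> fst q" unfolding a_def using fC by simp
    note ctx = fS gd pC amin
    have ab: "a \<in> S" "b \<in> S" "a < b" using ab[OF ctx] by auto
    have fIn: "finite (In S a b)" unfolding In_eq[OF ctx] using fS by simp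
    have fOut: "finite (Out S a b)" unfolding Out_eq[OF ctx] using fS by simp
    note IH1 = less.hyps[OF card_Cin[OF ctx] fIn good_in[OF ctx]]
    note IH2 = less.hyps[OF card_Cout[OF ctx] fOut good_out[OF ctx]]
    note cd = Cdecomp[OF ctx]
    have fCin: "finite (Cin C a b)" and fCout: "finite (Cout C b)" using fC cd(1) by (auto intro: finite_subset)
    have pnot: "(a,b) \<notin> Cin C a b \<union> Cout C b" using cd by blast
    let ?fc = "\<lambda>p. cnt (card (face S C p))"
    let ?fs = "\<lambda>p. card (face S C p) + 2"
    have P1: "(\<Prod>q\<in>Cin C a b. cnt (card (face (In S a b) (Cin C a b) q))) = (\<Prod>q\<in>Cin C a b. ?fc q)"
      by (rule prod.cong[OF refl]) (simp add: face_in[OF ctx])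
    have P2: "(\<Prod>q\<in>Cout C b. cnt (card (face (Out S a b) (Cout C b) q))) = (\<Prod>q\<in>Cout C b. ?fc q)"
      by (rule prod.cong[OF refl]) (simp add: face_out[OF ctx])
    have S1: "(\<Sum>q\<in>Cin C a b. card (face (In S a b) (Cin C a b) q) + 2) = (\<Sum>q\<in>Cin C a b. ?fs q)"
      by (rule sum.cong[OF refl]) (simp add: face_in[OF ctx])
    have S2: "(\<Sum>q\<in>Cout C b. card (face (Out S a b) (Cout C b) q) + 2) = (\<Sum>q\<in>Cout C b. ?fs q)"
      by (rule sum.cong[OF refl]) (simp add: face_out[OF ctx])
    have prodC: "(\<Prod>p\<in>C. ?fc p) = ?fc (a,b) * ((\<Prod>q\<in>Cin C a b. ?fc q) * (\<Prod>q\<in>Cout C b. ?fc q))"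
    proof -
      have "(\<Prod>p\<in>C. ?fc p) = (\<Prod>p\<in>insert (a,b) (Cin C a b \<union> Cout C b). ?fc p)" using cd(1) by simp
      also have "\<dots> = ?fc (a,b) * (\<Prod>p\<in>Cin C a b \<union> Cout C b. ?fc p)"
        by (rule prod.insert) (use fCin fCout pnot in auto)
      also have "(\<Prod>p\<in>Cin C a b \<union> Cout C b. ?fc p) = (\<Prod>q\<in>Cin C a b. ?fc q) * (\<Prod>q\<in>Cout C b. ?fc q)"
        by (rule prod.union_disjoint) (use fCin fCout cd(4) in auto)
      finally show ?thesis .
    qed
    have sumC: "(\<Sum>p\<in>C. ?fs p) = ?fs (a,b) + ((\<Sum>q\<in>Cin C a b. ?fs q) + (\<Sum>q\<in>Cout C b. ?fs q))"
    proof -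
      have "(\<Sum>p\<in>C. ?fs p) = (\<Sum>p\<in>insert (a,b) (Cin C a b \<union> Cout C b). ?fs p)" using cd(1) by simp
      also have "\<dots> = ?fs (a,b) + (\<Sum>p\<in>Cin C a b \<union> Cout C b. ?fs p)"
        by (rule sum.insert) (use fCin fCout pnot in auto)
      also have "(\<Sum>p\<in>Cin C a b \<union> Cout C b. ?fs p) = (\<Sum>q\<in>Cin C a b. ?fs q) + (\<Sum>q\<in>Cout C b. ?fs q)"
        by (rule sum.union_disjoint) (use fCin fCout cd(4) in auto)
      finally show ?thesis .
    qed
    have c1: "real (card {M \<in> NC S. C \<subseteq> M}) = cnt (card (face0 S C)) * (\<Prod>p\<in>C. ?fc p)"
    proof -
      have "real (card {M \<in> NC S. C \<subseteq> M}) = real (card {M1 \<in> NC (In S a b). Cin C a b \<subseteq> M1}) * real (card {M2 \<in> NC (Out S a b). Cout C b \<subseteq> M2})"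
        using count_split[OF ctx] by simp
      also have "\<dots> = (?fc (a,b) * (\<Prod>q\<in>Cin C a b. ?fc q)) * (cnt (card (face0 S C)) * (\<Prod>q\<in>Cout C b. ?fc q))"
        using IH1 IH2 P1 P2 face_in0[OF ctx] face_out0[OF ctx] by simp
      also have "\<dots> = cnt (card (face0 S C)) * (\<Prod>p\<in>C. ?fc p)" unfolding prodC by (simp add: algebra_simps)
      finally show ?thesis .
    qed
    have c2: "card S = card (face0 S C) + (\<Sum>p\<in>C. ?fs p)"
    proof -
      have "card S = card (In S a b) + card (Out S a b) + 2" by (rule card_split[OF ctx])
      also have "\<dots> = (card (face S C (a,b)) + (\<Sum>q\<in>Cin C a b. ?fs q)) + (card (face0 S C) + (\<Sum>q\<in>Cout C b. ?fs q)) + 2"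
        using IH1 IH2 S1 S2 face_in0[OF ctx] face_out0[OF ctx] by simp
      also have "\<dots> = card (face0 S C) + (\<Sum>p\<in>C. ?fs p)" unfolding sumC by simp
      finally show ?thesis .
    qed
    have c3: "even (card (face0 S C)) \<and> (\<forall>p\<in>C. even (card (face S C p)))"
      if ev: "even (card S)" "\<forall>p\<in>C. even (card {v\<in>S. fst p \<le> v \<and> v \<le> snd p})"
    proof -
      have eab: "even (card (In S a b) + 2)" using ev(2) pC card_ab[OF ctx] by metis
      hence eIn: "even (card (In S a b))" by simp
      have eOut: "even (card (Out S a b))" using ev(1) card_split[OF ctx] eIn by simp
      have ein: "\<forall>q\<in>Cin C a b. even (card {v\<in>In S a b. fst q \<le> v \<and> v \<le> snd q})"
        using ev(2) ivl_in[OF ctx] hCin[OF ctx] by simp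
      have eout: "\<forall>q\<in>Cout C b. even (card {v\<in>Out S a b. fst q \<le> v \<and> v \<le> snd q})"
        using ev(2) ivl_out[OF ctx] hCout[OF ctx] by simp
      have r1: "even (card (face S C (a,b))) \<and> (\<forall>q\<in>Cin C a b. even (card (face S C q)))"
        using IH1 eIn ein face_in0[OF ctx] face_in[OF ctx] by simp
      have r2: "even (card (face0 S C)) \<and> (\<forall>q\<in>Cout C b. even (card (face S C q)))"
        using IH2 eOut eout face_out0[OF ctx] face_out[OF ctx] by simp
      show ?thesis using r1 r2 cd(1) by auto
    qed
    show ?thesis using c1 c2 c3 by blast
  qed
qed


lemma real_bound_aux:
  fixes A B X P W c d :: real
  assumes pos: "A > 0" "B > 0" "X > 0" "P > 0" "W > 0" "c \<ge> 1" "d > 0"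
    and u1: "A \<le> X / P" and l1: "X / (d * P) \<le> A"
    and l2: "c * X / (6 * W) \<le> B" and u2: "B \<le> c * X / W"
  shows "A / B \<le> 6 * W / P" "W / (c * d * P) \<le> A / B"
proof -
  have a1: "A * P \<le> X" using u1 pos by (simp add: pos_le_divide_eq)
  have a2: "c * X \<le> 6 * W * B" using l2 pos by (simp add: pos_divide_le_eq mult.commute)
  have "X \<le> c * X" using pos by simp
  hence "A * P \<le> 6 * W * B" using a1 a2 by linarith
  thus "A / B \<le> 6 * W / P" using pos by (simp add: divide_simps mult.commute mult.left_commute)
next
  have b1: "X \<le> d * P * A" using l1 pos by (simp add: pos_divide_le_eq mult.commute)
  have b2: "B * W \<le> c * X" using u2 pos by (simp add: pos_le_divide_eq)
  have "c * X \<le> c * (d * P * A)" using b1 pos by simp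
  hence "B * W \<le> c * d * P * A" using b2 by (simp add: mult.assoc)
  thus "W / (c * d * P) \<le> A / B" using pos by (simp add: divide_simps mult.commute mult.left_commute)
qed

lemma prod_bounds:
  fixes m :: "nat \<Rightarrow> nat"
  shows "(\<Prod>i<s. Dc (m i)) \<le> 4 ^ (\<Sum>i<s. m i) / (\<Prod>i<s. Wt (m i))"
    and "4 ^ (\<Sum>i<s. m i) / (6 ^ s * (\<Prod>i<s. Wt (m i))) \<le> (\<Prod>i<s. Dc (m i))"
proof -
  have "(\<Prod>i<s. Dc (m i)) \<le> (\<Prod>i<s. 4 ^ m i / Wt (m i))"
    by (rule prod_mono) (use Dc_upper Dc_pos in \<open>auto simp: less_imp_le\<close>)
  also have "\<dots> = (\<Prod>i<s. (4::real) ^ m i) / (\<Prod>i<s. Wt (m i))" by (rule prod_dividef)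
  also have "(\<Prod>i<s. (4::real) ^ m i) = 4 ^ (\<Sum>i<s. m i)" by (simp add: power_sum)
  finally show "(\<Prod>i<s. Dc (m i)) \<le> 4 ^ (\<Sum>i<s. m i) / (\<Prod>i<s. Wt (m i))" .
next
  have "4 ^ (\<Sum>i<s. m i) / (6 ^ s * (\<Prod>i<s. Wt (m i))) = (\<Prod>i<s. (4::real) ^ m i) / (\<Prod>i<s. 6 * Wt (m i))"
    by (simp add: power_sum prod.distrib)
  also have "\<dots> = (\<Prod>i<s. 4 ^ m i / (6 * Wt (m i)))" by (rule prod_dividef[symmetric])
  also have "\<dots> \<le> (\<Prod>i<s. Dc (m i))"
    by (rule prod_mono) (use Dc_lower Wt_pos in \<open>auto simp: less_imp_le\<close>)
  finally show "4 ^ (\<Sum>i<s. m i) / (6 ^ s * (\<Prod>i<s. Wt (m i))) \<le> (\<Prod>i<s. Dc (m i))" .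
qed

lemma main_bound:
  fixes m :: "nat \<Rightarrow> nat"
  assumes n: "n = m0 + (\<Sum>i<s. m i) + s" "n \<ge> 1"
  defines "P \<equiv> Wt m0 * (\<Prod>i<s. Wt (m i))"
  defines "R \<equiv> Dc m0 * (\<Prod>i<s. Dc (m i)) / Dc n"
  shows "R \<le> 6 * Wt n / P" "Wt n / (4 ^ s * 6 ^ (s+1) * P) \<le> R"
proof -
  define E where "E = m0 + (\<Sum>i<s. m i)"
  have Ppos: "P > 0" unfolding P_def using Wt_pos by (simp add: prod_pos)
  have Qpos: "Dc m0 * (\<Prod>i<s. Dc (m i)) > 0" using Dc_pos by (simp add: prod_pos)
  note pb = prod_bounds[of m s]
  have u1: "Dc m0 * (\<Prod>i<s. Dc (m i)) \<le> 4 ^ E / P"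
  proof -
    have "Dc m0 * (\<Prod>i<s. Dc (m i)) \<le> (4 ^ m0 / Wt m0) * (4 ^ (\<Sum>i<s. m i) / (\<Prod>i<s. Wt (m i)))"
      by (rule mult_mono[OF Dc_upper pb(1)]) (use Dc_pos Wt_pos in \<open>auto simp: less_imp_le prod_pos\<close>)
    also have "\<dots> = 4 ^ E / P" unfolding E_def P_def by (simp add: power_add)
    finally show ?thesis .
  qed
  have l1: "4 ^ E / (6 ^ (s+1) * P) \<le> Dc m0 * (\<Prod>i<s. Dc (m i))"
  proof -
    have "4 ^ E / (6 ^ (s+1) * P) = (4 ^ m0 / (6 * Wt m0)) * (4 ^ (\<Sum>i<s. m i) / (6 ^ s * (\<Prod>i<s. Wt (m i))))"
      unfolding E_def P_def by (simp add: power_add)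
    also have "\<dots> \<le> Dc m0 * (\<Prod>i<s. Dc (m i))"
      by (rule mult_mono[OF Dc_lower pb(2)]) (use Dc_pos Wt_pos in \<open>auto simp: less_imp_le prod_pos\<close>)
    finally show ?thesis .
  qed
  have nE: "n = E + s" using n unfolding E_def by simp
  have l2: "4 ^ s * 4 ^ E / (6 * Wt n) \<le> Dc n" using Dc_lower[of n] unfolding nE by (simp add: power_add mult.commute)
  have u2: "Dc n \<le> 4 ^ s * 4 ^ E / Wt n" using Dc_upper[of n] unfolding nE by (simp add: power_add mult.commute)
  note r = real_bound_aux[OF Qpos Dc_pos[of n] _ Ppos Wt_pos[of n] _ _ u1 l1 l2 u2]
  show "R \<le> 6 * Wt n / P" unfolding R_def using r by simp
  show "Wt n / (4 ^ s * 6 ^ (s+1) * P) \<le> R" unfolding R_def using r by simp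
qed

lemma cat_NC: "catalan_matchings n = NC {1..2*n}"
proof -
  have e: "arcsin {1..2*n} = {(a,b). 1 \<le> a \<and> a < b \<and> b \<le> 2*n}" unfolding arcsin_def by auto
  show ?thesis unfolding catalan_matchings_def NC_def perfect_matching_def e by auto
qed

lemma powr32: "x > 0 \<Longrightarrow> (x::real) powr (3/2) = x * sqrt x"
proof -
  assume x: "x > 0"
  have "x powr (3/2) = x powr (1 + 1/2)" by simp
  also have "\<dots> = x powr 1 * x powr (1/2)" by (rule powr_add)
  also have "\<dots> = x * sqrt x" using x by (simp add: powr_half_sqrt)
  finally show ?thesis .
qed

lemma Wt_powr: "Wt m = (if real m \<noteq> 0 then real m powr (3/2) else 1)"
  unfolding Wt_def by (simp add: powr32)

lemma cnt_even: "even N \<Longrightarrow> cnt N = Dc (N div 2)" by (simp add: cnt_def)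

context
  fixes n s :: nat and x k :: "nat \<Rightarrow> nat"
  assumes vp: "valid_pair n s x k"
begin

definition "arc i = (x i, rend x k i)"
definition "CC = arc ` {..<s}"

lemma vp1: "i < s \<Longrightarrow> j < s \<Longrightarrow> i < j \<Longrightarrow> x i < x j" using vp unfolding valid_pair_def by blast
lemma vp2: "i < s \<Longrightarrow> 0 < k i \<and> 1 \<le> x i \<and> x i < rend x k i \<and> rend x k i \<le> 2*n"
  using vp unfolding valid_pair_def by blast
lemma vp3: "i < s \<Longrightarrow> j < s \<Longrightarrow> i \<noteq> j \<Longrightarrow> x i \<noteq> x j \<and> x i \<noteq> rend x k j \<and> rend x k i \<noteq> rend x k j"
  using vp unfolding valid_pair_def by blast
lemma vp4: "i < s \<Longrightarrow> j < s \<Longrightarrow> i \<noteq> j \<Longrightarrow> \<not> (x i < x j \<and> x j < rend x k i \<and> rend x k i < rend x k j)"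
  using vp unfolding valid_pair_def by blast

lemma arc_inj: "inj_on arc {..<s}"
proof (rule inj_onI)
  fix i j assume i: "i \<in> {..<s}" and j: "j \<in> {..<s}" and e: "arc i = arc j"
  hence xe: "x i = x j" unfolding arc_def by simp
  show "i = j"
  proof (rule ccontr)
    assume "i \<noteq> j"
    hence "i < j \<or> j < i" by auto
    thus False using vp1[of i j] vp1[of j i] i j xe by auto
  qed
qed

lemma arc_ne: "i < s \<Longrightarrow> j < s \<Longrightarrow> arc i = arc j \<longleftrightarrow> i = j"
  using arc_inj unfolding inj_on_def by auto

lemma good_CC: "good {1..2*n} CC"
  unfolding good_def
proof (intro conjI)
  show "finite CC" unfolding CC_def by simp
  show "\<forall>q\<in>CC. fst q < snd q \<and> fst q \<in> {1..2 * n} \<and> snd q \<in> {1..2 * n}"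
    unfolding CC_def arc_def using vp2 by fastforce
  show "\<forall>p\<in>CC. \<forall>q\<in>CC. p \<noteq> q \<longrightarrow> fst p \<noteq> fst q \<and> fst p \<noteq> snd q \<and> snd p \<noteq> snd q"
  proof (intro ballI impI)
    fix p q assume "p \<in> CC" "q \<in> CC" "p \<noteq> q"
    then obtain i j where ij: "i < s" "j < s" "p = arc i" "q = arc j" "i \<noteq> j" unfolding CC_def by auto
    thus "fst p \<noteq> fst q \<and> fst p \<noteq> snd q \<and> snd p \<noteq> snd q" using vp3[OF ij(1,2,5)] unfolding arc_def by simp
  qed
  show "noncrossing CC" unfolding noncrossing_def
  proof
    assume "\<exists>a b c d. a < b \<and> b < c \<and> c < d \<and> (a, c) \<in> CC \<and> (b, d) \<in> CC"
    then obtain a b c d where h: "a < b" "b < c" "c < d" "(a,c) \<in> CC" "(b,d) \<in> CC" by blast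
    then obtain i j where ij: "i < s" "j < s" "(a,c) = arc i" "(b,d) = arc j" unfolding CC_def by blast
    hence e: "a = x i" "c = rend x k i" "b = x j" "d = rend x k j" unfolding arc_def by auto
    have "i \<noteq> j" using h(1) e by auto
    thus False using vp4[OF ij(1,2)] h e by auto
  qed
qed

lemma face0_CC: "face0 {1..2*n} CC = M0 n s x k"
  unfolding face0_def M0_def CC_def arc_def by auto

lemma face_CC: "i < s \<Longrightarrow> face {1..2*n} CC (arc i) = Mset s x k i"
proof -
  assume i: "i < s"
  have b: "1 \<le> x i" "rend x k i \<le> 2*n" using vp2[OF i] by auto
  show ?thesis
    unfolding face_def Mset_def CC_def using b arc_ne[OF _ i]
    by (auto simp: arc_def)
qed

lemma event_eq: "{M \<in> catalan_matchings n. \<forall>i<s. (x i, rend x k i) \<in> M} = {M \<in> NC {1..2*n}. CC \<subseteq> M}"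
  unfolding cat_NC CC_def arc_def by auto

lemma ivl_even: "i < s \<Longrightarrow> even (card {v\<in>{1..2*n}. fst (arc i) \<le> v \<and> v \<le> snd (arc i)})"
proof -
  assume i: "i < s"
  have b: "1 \<le> x i" "rend x k i \<le> 2*n" "0 < k i" using vp2[OF i] by auto
  have "{v\<in>{1..2*n}. fst (arc i) \<le> v \<and> v \<le> snd (arc i)} = {x i..rend x k i}"
    using b unfolding arc_def by auto
  moreover have "card {x i..rend x k i} = 2 * k i" using b unfolding rend_def by simp
  ultimately show ?thesis by simp
qed

end


lemma prod_filter_Wt:
  fixes mm :: "nat \<Rightarrow> nat" and c :: "nat \<Rightarrow> nat"
  assumes "\<And>i. i < s \<Longrightarrow> c i = 2 * mm i"
  shows "(\<Prod>i\<in>{i. i < s \<and> real (c i) / 2 \<noteq> 0}. (real (c i) / 2) powr (3/2)) = (\<Prod>i<s. Wt (mm i))"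
proof -
  have "(\<Prod>i\<in>{i. i < s \<and> real (c i) / 2 \<noteq> 0}. (real (c i) / 2) powr (3/2))
      = (\<Prod>i\<in>{i\<in>{..<s}. real (mm i) \<noteq> 0}. real (mm i) powr (3/2))"
    by (rule prod.cong) (auto simp: assms)
  also have "\<dots> = (\<Prod>i<s. (if real (mm i) \<noteq> 0 then real (mm i) powr (3/2) else 1))"
    by (rule prod.inter_filter) simp
  also have "\<dots> = (\<Prod>i<s. Wt (mm i))" by (simp add: Wt_powr)
  finally show ?thesis .
qed

theorem corollary3p3:
  shows "\<forall>s::nat. 0 < s \<longrightarrow> (\<exists>\<alpha> \<beta> :: real. 0 < \<alpha> \<and> 0 < \<beta> \<and>
     (\<forall>n::nat. \<forall>x k :: nat \<Rightarrow> nat. 1 \<le> n \<longrightarrow> valid_pair n s x k \<longrightarrow>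
        \<alpha> * real n powr (3/2) / prod_m n s x k \<le> probA n s x k \<and>
        probA n s x k \<le> \<beta> * real n powr (3/2) / prod_m n s x k))"
proof (intro allI impI)
  fix s :: nat assume "0 < s"
  show "\<exists>\<alpha> \<beta> :: real. 0 < \<alpha> \<and> 0 < \<beta> \<and>
     (\<forall>n::nat. \<forall>x k :: nat \<Rightarrow> nat. 1 \<le> n \<longrightarrow> valid_pair n s x k \<longrightarrow>
        \<alpha> * real n powr (3/2) / prod_m n s x k \<le> probA n s x k \<and>
        probA n s x k \<le> \<beta> * real n powr (3/2) / prod_m n s x k)"
  proof (intro exI conjI allI impI)
    show "(0::real) < 1 / (4 ^ s * 6 ^ (s+1))" by simp
    show "(0::real) < 6" by simp
    fix n :: nat and x k :: "nat \<Rightarrow> nat"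
    assume n1: "1 \<le> n" and vp: "valid_pair n s x k"
    define S where "S = {1..2*n}"
    define C where "C = CC s x k"
    have fS: "finite S" unfolding S_def by simp
    note D = decomp[OF fS good_CC[OF vp, folded S_def C_def]]
    have Ce: "C = arc x k ` {..<s}" unfolding C_def by (rule CC_def[OF vp])
    note inj = arc_inj[OF vp]
    have fC: "\<And>i. i < s \<Longrightarrow> face S C (arc x k i) = Mset s x k i"
      unfolding S_def C_def by (rule face_CC[OF vp])
    have f0: "face0 S C = M0 n s x k" unfolding S_def C_def by (rule face0_CC[OF vp])
    have cS: "card S = 2 * n" unfolding S_def by simp
    have ev: "even (card (M0 n s x k)) \<and> (\<forall>i<s. even (card (Mset s x k i)))"
    proof -
      have "\<forall>p\<in>C. even (card {v\<in>S. fst p \<le> v \<and> v \<le> snd p})"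
        unfolding Ce S_def using ivl_even[OF vp] by auto
      hence "even (card (face0 S C)) \<and> (\<forall>p\<in>C. even (card (face S C p)))" using D cS by simp
      thus ?thesis using f0 fC unfolding Ce by auto
    qed
    define m0 where "m0 = card (M0 n s x k) div 2"
    define mm where "mm = (\<lambda>i. card (Mset s x k i) div 2)"
    have cm0: "card (M0 n s x k) = 2 * m0" unfolding m0_def using ev by simp
    have cmm: "\<And>i. i < s \<Longrightarrow> card (Mset s x k i) = 2 * mm i" unfolding mm_def using ev by simp
    have P: "(\<Prod>p\<in>C. cnt (card (face S C p))) = (\<Prod>i<s. Dc (mm i))"
    proof -
      have "(\<Prod>p\<in>C. cnt (card (face S C p))) = (\<Prod>i<s. cnt (card (face S C (arc x k i))))"
        unfolding Ce by (rule prod.reindex[OF inj, unfolded comp_def])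
      also have "\<dots> = (\<Prod>i<s. Dc (mm i))"
        by (rule prod.cong[OF refl]) (simp add: fC cmm cnt_even)
      finally show ?thesis .
    qed
    have Sm: "(\<Sum>p\<in>C. card (face S C p) + 2) = (\<Sum>i<s. 2 * mm i + 2)"
    proof -
      have "(\<Sum>p\<in>C. card (face S C p) + 2) = (\<Sum>i<s. card (face S C (arc x k i)) + 2)"
        unfolding Ce by (rule sum.reindex[OF inj, unfolded comp_def])
      also have "\<dots> = (\<Sum>i<s. 2 * mm i + 2)"
        by (rule sum.cong[OF refl]) (simp add: fC cmm)
      finally show ?thesis .
    qed
    have nsum: "n = m0 + (\<Sum>i<s. mm i) + s"
    proof -
      have "2 * n = 2 * m0 + (\<Sum>i<s. 2 * mm i + 2)" using D cS f0 cm0 Sm by simp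
      also have "(\<Sum>i<s. 2 * mm i + 2) = 2 * (\<Sum>i<s. mm i) + 2 * s"
        by (subst sum.distrib) (simp add: sum_distrib_left)
      finally show ?thesis by simp
    qed
    have num: "real (card {M \<in> catalan_matchings n. \<forall>i<s. (x i, rend x k i) \<in> M}) = Dc m0 * (\<Prod>i<s. Dc (mm i))"
    proof -
      have "real (card {M \<in> catalan_matchings n. \<forall>i<s. (x i, rend x k i) \<in> M}) = real (card {M \<in> NC S. C \<subseteq> M})"
        unfolding event_eq[OF vp] S_def C_def ..
      also have "\<dots> = cnt (card (face0 S C)) * (\<Prod>p\<in>C. cnt (card (face S C p)))" using D by simp
      also have "\<dots> = Dc m0 * (\<Prod>i<s. Dc (mm i))" unfolding P f0 cm0 by (simp add: cnt_even)
      finally show ?thesis .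
    qed
    have den: "real (card (catalan_matchings n)) = Dc n"
      unfolding cat_NC using NC_count[of "{1..2*n}"] by (simp add: cnt_even)
    have prob: "probA n s x k = Dc m0 * (\<Prod>i<s. Dc (mm i)) / Dc n"
      unfolding probA_def num den ..
    have pm: "prod_m n s x k = Wt m0 * (\<Prod>i<s. Wt (mm i))"
    proof -
      have "(let m0 = real (card (M0 n s x k)) / 2 in if m0 \<noteq> 0 then m0 powr (3/2) else 1) = Wt m0"
        unfolding cm0 Let_def by (simp add: Wt_powr)
      moreover have "(\<Prod>i\<in>{i. i < s \<and> real (card (Mset s x k i)) / 2 \<noteq> 0}. (real (card (Mset s x k i)) / 2) powr (3/2))
          = (\<Prod>i<s. Wt (mm i))"
        by (rule prod_filter_Wt) (rule cmm)
      ultimately show ?thesis unfolding prod_m_def by simp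
    qed
    have npw: "real n powr (3/2) = Wt n" using n1 by (simp add: Wt_powr)
    note mb = main_bound[OF nsum n1]
    show "1 / (4 ^ s * 6 ^ (s+1)) * real n powr (3/2) / prod_m n s x k \<le> probA n s x k"
      unfolding prob pm npw using mb(2) by simp
    show "probA n s x k \<le> 6 * real n powr (3/2) / prod_m n s x k"
      unfolding prob pm npw using mb(1) by simp
  qed
qed


end
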